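(* Let $\theta$ be a discrete valuation on Johnstone's dcpo $\mathcal J$ (Scott topology) with total mass $\theta(\mathcal J)=1-r$, where $r>0$. Then $\theta+r\mu$ is not the supremum of a directed family of discrete valuations, where $\mu(U)=1$ for every non-empty Scott-open $U$ and $\mu(\emptyset)=0$.
   Context: Johnstone's dcpo: $\mathcal J=\mathbb N\times(\mathbb N\cup\{\infty\})$ ordered by $(a,b)\le(c,d)$ iff either ($a=c$ and $b\le d$) or ($d=\infty$ and $b\le c$). A valuation is a strict, monotone, modular map from the Scott-open sets to $[0,\infty]$; continuous valuations are ordered pointwise (stochastic order), and the supremum of a directed family is computed pointwise. A discrete valuation is one of the form $\sum_{i=1}^\infty r_i\delta_{x_i}$ ($r_i\in[0,\infty)$, $\delta_x$ the Dirac valuation at $x$). *)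

theory Defs
  imports "HOL-Library.Extended_Nat" "HOL-Library.Extended_Nonnegative_Real"
begin

text \<open>Johnstone's dcpo J = N x (N u {infinity}).\<close>
type_synonym jpt = "nat \<times> enat"

definition jle :: "jpt \<Rightarrow> jpt \<Rightarrow> bool" where
  "jle p q \<longleftrightarrow> (fst p = fst q \<and> snd p \<le> snd q) \<or> (snd q = \<infinity> \<and> snd p \<le> enat (fst q))"

definition j_directed :: "jpt set \<Rightarrow> bool" where
  "j_directed D \<longleftrightarrow> D \<noteq> {} \<and> (\<forall>a\<in>D. \<forall>b\<in>D. \<exists>c\<in>D. jle a c \<and> jle b c)"

definition j_is_lub :: "jpt set \<Rightarrow> jpt \<Rightarrow> bool" where
  "j_is_lub D x \<longleftrightarrow> (\<forall>d\<in>D. jle d x) \<and> (\<forall>y. (\<forall>d\<in>D. jle d y) \<longrightarrow> jle x y)"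

definition scott_open :: "jpt set \<Rightarrow> bool" where
  "scott_open U \<longleftrightarrow> (\<forall>x y. x \<in> U \<longrightarrow> jle x y \<longrightarrow> y \<in> U) \<and>
     (\<forall>D x. j_directed D \<longrightarrow> j_is_lub D x \<longrightarrow> x \<in> U \<longrightarrow> D \<inter> U \<noteq> {})"

text \<open>Valuations are represented as maps on sets; only their values on Scott-open sets matter.
  A discrete valuation agrees on Scott-open sets with some sum of r_i delta_{x_i}.\<close>
definition discrete_valuation :: "(jpt set \<Rightarrow> ennreal) \<Rightarrow> bool" where
  "discrete_valuation \<nu> \<longleftrightarrow> (\<exists>(rs :: nat \<Rightarrow> real) (xs :: nat \<Rightarrow> jpt). (\<forall>i. 0 \<le> rs i) \<and>
     (\<forall>U. scott_open U \<longrightarrow> \<nu> U = (\<Sum>i. ennreal (rs i) * indicator U (xs i))))"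

definition val_directed :: "(jpt set \<Rightarrow> ennreal) set \<Rightarrow> bool" where
  "val_directed F \<longleftrightarrow> F \<noteq> {} \<and> (\<forall>a\<in>F. \<forall>b\<in>F. \<exists>c\<in>F.
     \<forall>U. scott_open U \<longrightarrow> a U \<le> c U \<and> b U \<le> c U)"

definition is_directed_sup :: "(jpt set \<Rightarrow> ennreal) set \<Rightarrow> (jpt set \<Rightarrow> ennreal) \<Rightarrow> bool" where
  "is_directed_sup F v \<longleftrightarrow> val_directed F \<and> (\<forall>U. scott_open U \<longrightarrow> v U = (SUP \<nu>\<in>F. \<nu> U))"

definition mu_J :: "jpt set \<Rightarrow> ennreal" where
  "mu_J U = (if U = {} then 0 else 1)"

end

theory Submission imports Defs begin

lemma jle_refl: "jle x x" by (simp add: jle_def)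

lemma jle_trans: "jle x y \<Longrightarrow> jle y z \<Longrightarrow> jle x z"
  unfolding jle_def by (auto intro: order_trans)

lemma jle_max: "snd m = \<infinity> \<Longrightarrow> jle m y \<Longrightarrow> y = m"
  unfolding jle_def by (cases m; cases y) auto

lemma open_UNIV: "scott_open UNIV"
  unfolding scott_open_def j_directed_def by auto

lemma open_Int: assumes "scott_open U" "scott_open V" shows "scott_open (U \<inter> V)"
  unfolding scott_open_def
proof (intro conjI allI impI)
  fix x y assume "x \<in> U \<inter> V" "jle x y" then show "y \<in> U \<inter> V"
    using assms unfolding scott_open_def by blast
next
  fix D x assume D: "j_directed D" "j_is_lub D x" "x \<in> U \<inter> V"
  then obtain d1 d2 where "d1 \<in> D \<inter> U" "d2 \<in> D \<inter> V" using assms unfolding scott_open_def by blast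
  moreover then obtain d3 where "d3 \<in> D" "jle d1 d3" "jle d2 d3" using D(1) unfolding j_directed_def by blast
  ultimately have "d3 \<in> U \<inter> V" using assms unfolding scott_open_def by blast
  then show "D \<inter> (U \<inter> V) \<noteq> {}" using \<open>d3 \<in> D\<close> by blast
qed

lemma open_notbelow: "scott_open {z. \<not> jle z b}"
  unfolding scott_open_def
proof (intro conjI allI impI)
  fix x y assume "x \<in> {z. \<not> jle z b}" "jle x y" then show "y \<in> {z. \<not> jle z b}"
    using jle_trans by blast
next
  fix D x assume D: "j_directed D" "j_is_lub D x" "x \<in> {z. \<not> jle z b}"
  then show "D \<inter> {z. \<not> jle z b} \<noteq> {}" unfolding j_is_lub_def by blast
qed

lemma open_notbelow_fin: "finite B \<Longrightarrow> scott_open {z. \<forall>b\<in>B. \<not> jle z b}"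
proof (induction B rule: finite_induct)
  case empty then show ?case using open_UNIV by simp
next
  case (insert b B)
  have "{z. \<forall>c\<in>insert b B. \<not> jle z c} = {z. \<not> jle z b} \<inter> {z. \<forall>b\<in>B. \<not> jle z b}" by blast
  then show ?case using open_Int[OF open_notbelow insert(3)] by simp
qed

definition Wk :: "nat \<Rightarrow> jpt set" where "Wk k = {p. k \<le> fst p \<and> enat k \<le> snd p}"

lemma Wk_ne: "(k, enat k) \<in> Wk k" by (simp add: Wk_def)

lemma open_Wk: "scott_open (Wk k)"
  unfolding scott_open_def
proof (intro conjI allI impI)
  fix x y assume "x \<in> Wk k" "jle x y" then show "y \<in> Wk k"
    unfolding Wk_def jle_def
    by (cases x; cases y) (auto intro: order_trans, metis enat_ord_simps(1) order_trans)
next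
  fix D x assume D: "j_directed D" "j_is_lub D x" "x \<in> Wk k"
  show "D \<inter> Wk k \<noteq> {}"
  proof
    assume E: "D \<inter> Wk k = {}"
    have below: "\<And>d. d \<in> D \<Longrightarrow> jle d x" using D(2) unfolding j_is_lub_def by blast
    have fin: "\<And>d. d \<in> D \<Longrightarrow> snd d \<noteq> \<infinity>"
      using jle_max below E D(3) by blast
    have col: "\<And>d1 d2. d1 \<in> D \<Longrightarrow> d2 \<in> D \<Longrightarrow> fst d1 = fst d2"
    proof -
      fix d1 d2 assume "d1 \<in> D" "d2 \<in> D"
      then obtain d3 where "d3 \<in> D" "jle d1 d3" "jle d2 d3" using D(1) unfolding j_directed_def by blast
      then show "fst d1 = fst d2" using fin[OF \<open>d3 \<in> D\<close>] unfolding jle_def by auto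
    qed
    obtain d0 where d0: "d0 \<in> D" using D(1) unfolding j_directed_def by blast
    define c where "c = fst d0"
    have allc: "\<And>d. d \<in> D \<Longrightarrow> fst d = c" using col d0 c_def by blast
    show False
    proof (cases "c = fst x")
      case True
      have ck: "k \<le> c" using D(3) True unfolding Wk_def by simp
      have lt: "\<And>d. d \<in> D \<Longrightarrow> snd d < enat k"
        using E allc ck unfolding Wk_def by (force simp: not_le)
      have k1: "k \<ge> 1" using lt[OF d0] by (cases "snd d0") auto
      have ub: "\<And>d. d \<in> D \<Longrightarrow> jle d (c, enat (k - 1))"
      proof -
        fix d assume "d \<in> D"
        then show "jle d (c, enat (k - 1))" using lt[of d] allc[of d] k1
          unfolding jle_def by (cases "snd d") auto
      qed
      then have "jle x (c, enat (k - 1))" using D(2) unfolding j_is_lub_def by blast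
      then show False using D(3) k1 unfolding jle_def Wk_def by (cases "snd x") auto
    next
      case False
      have xinf: "snd x = \<infinity>" using below[OF d0] False c_def unfolding jle_def by auto
      have "\<And>d. d \<in> D \<Longrightarrow> jle d (c, \<infinity>)" using allc unfolding jle_def by auto
      then have "jle x (c, \<infinity>)" using D(2) unfolding j_is_lub_def by blast
      then show False using False xinf unfolding jle_def by auto
    qed
  qed
qed


definition rsum :: "(nat \<Rightarrow> real) \<Rightarrow> (nat \<Rightarrow> jpt) \<Rightarrow> jpt set \<Rightarrow> real" where
  "rsum s y U = (\<Sum>i. s i * indicator U (y i))"
definition psum :: "(nat \<Rightarrow> real) \<Rightarrow> (nat \<Rightarrow> jpt) \<Rightarrow> nat \<Rightarrow> jpt set \<Rightarrow> real" where
  "psum s y N U = (\<Sum>i<N. s i * indicator U (y i))"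

context
  fixes s :: "nat \<Rightarrow> real" and y :: "nat \<Rightarrow> jpt"
  assumes nn: "\<And>i. 0 \<le> s i" and sm: "summable s"
begin

lemma summable_ind: "summable (\<lambda>i. s i * indicator U (y i))"
  by (rule summable_comparison_test[OF _ sm]) (auto simp: nn indicator_def)

lemma rsum_mono: "U \<subseteq> V \<Longrightarrow> rsum s y U \<le> rsum s y V"
  unfolding rsum_def
  by (rule suminf_le[OF _ summable_ind summable_ind]) (auto simp: nn indicator_def)

lemma rsum_UNIV: "rsum s y UNIV = suminf s"
  unfolding rsum_def by simp

lemma rsum_nonneg: "0 \<le> rsum s y U"
  unfolding rsum_def by (rule suminf_nonneg) (auto simp: summable_ind nn)

lemma psum_le: "psum s y N U \<le> rsum s y U"
  unfolding rsum_def psum_def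
  by (rule sum_le_suminf) (auto simp: summable_ind nn)

lemma rsum_compl: "rsum s y U + rsum s y (- U) = rsum s y UNIV"
  unfolding rsum_def
proof -
  have "\<And>i. s i * indicator U (y i) + s i * indicator (- U) (y i) = s i * indicator UNIV (y i)"
    by (auto simp: indicator_def)
  then show "(\<Sum>i. s i * indicator U (y i)) + (\<Sum>i. s i * indicator (- U) (y i)) = (\<Sum>i. s i * indicator UNIV (y i))"
    by (subst suminf_add[OF summable_ind summable_ind]) simp
qed

lemma tail: assumes "0 < e" shows "\<exists>N. \<forall>U. rsum s y U \<le> psum s y N U + e"
proof -
  obtain N where N: "\<And>n. n \<ge> N \<Longrightarrow> norm (\<Sum>i. s (i + n)) < e"
    using suminf_exist_split[OF assms sm] by blast
  have "rsum s y U \<le> psum s y N U + e" for U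
  proof -
    have "rsum s y U = (\<Sum>i. s (i + N) * indicator U (y (i + N))) + psum s y N U"
      unfolding rsum_def psum_def by (rule suminf_split_initial_segment[OF summable_ind])
    moreover have "(\<Sum>i. s (i + N) * indicator U (y (i + N))) \<le> (\<Sum>i. s (i + N))"
      by (rule suminf_le[OF _ summable_ignore_initial_segment[OF summable_ind] summable_ignore_initial_segment[OF sm]])
        (auto simp: nn indicator_def)
    moreover have "(\<Sum>i. s (i + N)) < e" using N[of N] by simp
    ultimately show ?thesis by simp
  qed
  then show ?thesis by blast
qed

end

lemma rep:
  assumes "discrete_valuation \<nu>" "\<nu> UNIV \<le> 1"
  shows "\<exists>s y. (\<forall>i. 0 \<le> s i) \<and> summable s \<and> (\<forall>U. scott_open U \<longrightarrow> \<nu> U = ennreal (rsum s y U))"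
proof -
  obtain s y where nn: "\<forall>i. 0 \<le> s i" and eq: "\<forall>U. scott_open U \<longrightarrow> \<nu> U = (\<Sum>i. ennreal (s i) * indicator U (y i))"
    using assms(1) unfolding discrete_valuation_def by blast
  have e2: "ennreal (s i) * indicator U (y i) = ennreal (s i * indicator U (y i))" for i U
    using nn by (simp add: ennreal_mult ennreal_indicator)
  have "\<nu> UNIV = (\<Sum>i. ennreal (s i))" using eq open_UNIV by simp
  then have "(\<Sum>i. ennreal (s i)) \<noteq> top" using assms(2) by (metis ennreal_one_neq_top neq_top_trans)
  then have sm: "summable s" using summable_suminf_not_top nn by blast
  have "\<forall>U. scott_open U \<longrightarrow> \<nu> U = ennreal (rsum s y U)"
  proof (intro allI impI)
    fix U assume "scott_open U"
    then have "\<nu> U = (\<Sum>i. ennreal (s i * indicator U (y i)))" using eq e2 by simp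
    also have "\<dots> = ennreal (rsum s y U)" unfolding rsum_def
      by (rule suminf_ennreal2) (auto simp: nn summable_ind[OF _ sm])
    finally show "\<nu> U = ennreal (rsum s y U)" .
  qed
  then show ?thesis using nn sm by blast
qed


lemma psum_mono: "(\<And>i. 0 \<le> s i) \<Longrightarrow> (\<And>i. i < N \<Longrightarrow> y i \<in> U \<Longrightarrow> y i \<in> U') \<Longrightarrow> psum s y N U \<le> psum s y N U'"
  unfolding psum_def by (rule sum_mono) (auto simp: indicator_def)

lemma psum_split: "psum s y N U = psum s y N (U \<inter> A) + psum s y N (U - A)"
  unfolding psum_def sum.distrib[symmetric] by (rule sum.cong) (auto simp: indicator_def)

lemma ennreal_lessD: "ennreal a < ennreal b \<Longrightarrow> 0 \<le> b \<Longrightarrow> a < b"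
  by (cases "0 \<le> a") (auto simp: ennreal_less_iff)

theorem proposition3p12:
  fixes \<theta> :: "jpt set \<Rightarrow> ennreal" and r :: real
  assumes "discrete_valuation \<theta>"
    and "r > 0"
    and "\<theta> UNIV + ennreal r = 1"
  shows "\<not> (\<exists>F. (\<forall>\<nu>\<in>F. discrete_valuation \<nu>) \<and>
              is_directed_sup F (\<lambda>U. \<theta> U + ennreal r * mu_J U))"
proof
  define lam where "lam = (\<lambda>U. \<theta> U + ennreal r * mu_J U)"
  assume "\<exists>F. (\<forall>\<nu>\<in>F. discrete_valuation \<nu>) \<and> is_directed_sup F (\<lambda>U. \<theta> U + ennreal r * mu_J U)"
  then obtain F where Fd: "\<forall>\<nu>\<in>F. discrete_valuation \<nu>" and sup: "is_directed_sup F lam"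
    unfolding lam_def by blast
  have lamsup: "\<And>U. scott_open U \<Longrightarrow> lam U = (SUP \<nu>\<in>F. \<nu> U)" using sup unfolding is_directed_sup_def by blast
  have dir: "\<And>a b. a \<in> F \<Longrightarrow> b \<in> F \<Longrightarrow> \<exists>c\<in>F. \<forall>U. scott_open U \<longrightarrow> a U \<le> c U \<and> b U \<le> c U"
    using sup unfolding is_directed_sup_def val_directed_def by blast
  have lamU: "lam UNIV = 1" using assms(3) unfolding lam_def mu_J_def by simp
  have le_lam: "\<And>\<nu> U. \<nu> \<in> F \<Longrightarrow> scott_open U \<Longrightarrow> \<nu> U \<le> lam U"
    using lamsup by (metis SUP_upper)
  have le1: "\<And>\<nu>. \<nu> \<in> F \<Longrightarrow> \<nu> UNIV \<le> 1" using le_lam open_UNIV lamU by metis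
  have repF: "\<And>\<nu>. \<nu> \<in> F \<Longrightarrow> \<exists>s y. (\<forall>i. 0 \<le> s i) \<and> summable s \<and> (\<forall>U. scott_open U \<longrightarrow> \<nu> U = ennreal (rsum s y U))"
    using rep Fd le1 by blast
  have lamW: "ennreal r \<le> lam (Wk k)" for k
  proof -
    have "mu_J (Wk k) = 1" using Wk_ne unfolding mu_J_def by auto
    then show ?thesis unfolding lam_def by simp
  qed
  define e where "e = r / 10"
  have e0: "0 < e" using assms(2) unfolding e_def by simp
  have getW: "\<exists>\<nu>\<in>F. ennreal (r - e) < \<nu> (Wk k)" for k
  proof -
    have "ennreal (r - e) < ennreal r" using e0 assms(2) by (intro ennreal_lessI) auto
    also have "\<dots> \<le> (SUP \<nu>\<in>F. \<nu> (Wk k))" using lamW lamsup[OF open_Wk] by metis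
    finally show ?thesis by (simp add: less_SUP_iff)
  qed
  obtain \<nu>0 where nu0F: "\<nu>0 \<in> F" and nu0: "ennreal (1 - e) < \<nu>0 UNIV"
  proof -
    have "ennreal (1 - e) < 1" using e0 ennreal_lessI[of 1 "1 - e"] by simp
    also have "\<dots> = (SUP \<nu>\<in>F. \<nu> UNIV)" using lamU lamsup[OF open_UNIV] by metis
    finally show ?thesis using that by (auto simp: less_SUP_iff)
  qed
  obtain t x where tnn: "\<forall>i. 0 \<le> t i" and tsm: "summable t" and teq: "\<forall>U. scott_open U \<longrightarrow> \<nu>0 U = ennreal (rsum t x U)"
    using repF[OF nu0F] by blast
  obtain N0 where N0: "\<And>U. rsum t x U \<le> psum t x N0 U + e" using tail[OF _ tsm e0] tnn by blast
  have t1: "1 - e < rsum t x UNIV"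
    using nu0 teq open_UNIV rsum_nonneg[OF _ tsm] tnn ennreal_lessD by metis
  define K0 where "K0 = Suc (\<Sum>i<N0. fst (x i))"
  have xK0: "\<And>i. i < N0 \<Longrightarrow> fst (x i) < K0"
  proof -
    fix i assume "i < N0"
    then have "fst (x i) \<le> (\<Sum>i<N0. fst (x i))" by (intro member_le_sum) auto
    then show "fst (x i) < K0" unfolding K0_def by simp
  qed
  have key: "psum s y N (Wk k \<inter> {p. snd p \<noteq> \<infinity>}) < 2 * e"
    if nF: "\<nu> \<in> F" and nle: "\<forall>U. scott_open U \<longrightarrow> \<nu>0 U \<le> \<nu> U" and snn: "\<forall>i. 0 \<le> s i"
      and ssm: "summable s" and seq: "\<forall>U. scott_open U \<longrightarrow> \<nu> U = ennreal (rsum s y U)"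
      and kK: "K0 \<le> k" for \<nu> s y N k
  proof -
    define S where "S = Wk k \<inter> {p. snd p \<noteq> \<infinity>}"
    define B where "B = y ` ({..<N} \<inter> {i. y i \<in> S})"
    define V0 where "V0 = {z. \<forall>b\<in>B. \<not> jle z b}"
    have oV0: "scott_open V0" unfolding V0_def by (rule open_notbelow_fin) (simp add: B_def)
    have xin: "x i \<in> V0" if "i < N0" for i
    proof -
      have "\<not> jle (x i) b" if "b \<in> B" for b
      proof -
        have "b \<in> S" using that unfolding B_def by auto
        then have "k \<le> fst b" "snd b \<noteq> \<infinity>" unfolding S_def Wk_def by auto
        then show ?thesis using xK0[OF \<open>i < N0\<close>] kK unfolding jle_def by auto
      qed
      then show ?thesis unfolding V0_def by auto
    qed
    have "psum t x N0 V0 = psum t x N0 UNIV"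
      unfolding psum_def by (rule sum.cong) (auto simp: xin)
    then have "1 - 2 * e < rsum t x V0"
      using N0[of UNIV] t1 psum_le[OF _ tsm, of x N0 V0] tnn by fastforce
    also have "rsum t x V0 \<le> rsum s y V0"
    proof -
      have "ennreal (rsum t x V0) \<le> ennreal (rsum s y V0)" using nle oV0 teq seq by metis
      then show ?thesis using rsum_nonneg[OF _ ssm] snn by simp
    qed
    finally have a: "1 - 2 * e < rsum s y V0" .
    have "psum s y N S \<le> psum s y N (- V0)"
    proof (rule psum_mono)
      show "0 \<le> s i" for i using snn by simp
      fix i assume "i < N" "y i \<in> S"
      then have "y i \<in> B" unfolding B_def by auto
      then show "y i \<in> - V0" unfolding V0_def using jle_refl[of "y i"] by blast
    qed
    also have "\<dots> \<le> rsum s y (- V0)" using psum_le[OF _ ssm] snn by blast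
    finally have b: "psum s y N S \<le> rsum s y (- V0)" .
    have "ennreal (rsum s y UNIV) \<le> 1" using le1[OF nF] seq open_UNIV by metis
    then have "rsum s y UNIV \<le> 1" by (simp add: ennreal_le_iff2)
    then show ?thesis using a b rsum_compl[OF _ ssm, of y V0] snn unfolding S_def by fastforce
  qed

  define Inv where "Inv = (\<lambda>\<nu> C (c::real). \<nu> \<in> F \<and> (\<forall>U. scott_open U \<longrightarrow> \<nu>0 U \<le> \<nu> U) \<and> finite C \<and>
      (\<forall>m\<in>C. snd m = \<infinity>) \<and> (\<forall>V. scott_open V \<longrightarrow> C \<subseteq> V \<longrightarrow> ennreal c \<le> \<nu> V))"
  have step: "\<exists>\<nu>' C'. Inv \<nu>' C' (c + r / 2)" if I: "Inv \<nu> C c" for \<nu> C c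
  proof -
    have nF: "\<nu> \<in> F" and nle: "\<forall>U. scott_open U \<longrightarrow> \<nu>0 U \<le> \<nu> U" and finC: "finite C"
      and maxC: "\<forall>m\<in>C. snd m = \<infinity>" and cV: "\<forall>V. scott_open V \<longrightarrow> C \<subseteq> V \<longrightarrow> ennreal c \<le> \<nu> V"
      using I unfolding Inv_def by auto
    define k where "k = K0 + Suc (\<Sum>m\<in>C. fst m)"
    have kK: "K0 \<le> k" unfolding k_def by simp
    have Ck: "\<And>m. m \<in> C \<Longrightarrow> fst m < k"
    proof -
      fix m assume "m \<in> C"
      then have "fst m \<le> (\<Sum>m\<in>C. fst m)" using finC by (intro member_le_sum) auto
      then show "fst m < k" unfolding k_def by simp
    qed
    define W where "W = Wk k"
    obtain \<nu>1 where n1F: "\<nu>1 \<in> F" and n1: "ennreal (r - e) < \<nu>1 W" using getW unfolding W_def by blast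
    obtain \<nu>2 where n2F: "\<nu>2 \<in> F" and n2: "\<forall>U. scott_open U \<longrightarrow> \<nu> U \<le> \<nu>2 U \<and> \<nu>1 U \<le> \<nu>2 U"
      using dir[OF nF n1F] by blast
    obtain s y where snn: "\<forall>i. 0 \<le> s i" and ssm: "summable s" and seq: "\<forall>U. scott_open U \<longrightarrow> \<nu>2 U = ennreal (rsum s y U)"
      using repF[OF n2F] by blast
    obtain N where N: "\<And>U. rsum s y U \<le> psum s y N U + e" using tail[OF _ ssm e0] snn by blast
    have n0le2: "\<forall>U. scott_open U \<longrightarrow> \<nu>0 U \<le> \<nu>2 U" using nle n2 order_trans by blast
    define C' where "C' = C \<union> y ` ({..<N} \<inter> {i. y i \<in> W \<and> snd (y i) = \<infinity>})"
    have "ennreal (c + r / 2) \<le> \<nu>2 V" if oV: "scott_open V" and CV: "C' \<subseteq> V" for V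
    proof -
      define G where "G = y ` ({..<N} \<inter> {i. y i \<in> W})"
      define V' where "V' = V \<inter> {z. \<forall>b\<in>G. \<not> jle z b}"
      have oV': "scott_open V'" unfolding V'_def
        by (rule open_Int[OF oV open_notbelow_fin]) (simp add: G_def)
      have CV': "C \<subseteq> V'"
      proof
        fix m assume mC: "m \<in> C"
        have "\<not> jle m b" if "b \<in> G" for b
        proof
          assume "jle m b"
          then have "b = m" using jle_max maxC mC by blast
          moreover have "k \<le> fst b" using that unfolding G_def W_def Wk_def by auto
          ultimately show False using Ck[OF mC] by simp
        qed
        then show "m \<in> V'" using mC CV unfolding V'_def C'_def by auto
      qed
      have "ennreal c \<le> \<nu>2 V'" using cV oV' CV' n2 order_trans by blast
      then have "ennreal c \<le> ennreal (rsum s y V')" using seq oV' by simp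
      moreover have "0 \<le> rsum s y V'" using rsum_nonneg[OF _ ssm] snn by blast
      ultimately have c1: "c \<le> rsum s y V'" by (auto simp: ennreal_le_iff2)
      have "psum s y N V' \<le> psum s y N (V - W)"
      proof (rule psum_mono)
        show "0 \<le> s i" for i using snn by simp
        fix i assume "i < N" "y i \<in> V'"
        moreover have "y i \<notin> W" if "i < N" "y i \<in> V'"
        proof
          assume "y i \<in> W"
          then have "y i \<in> G" using that unfolding G_def by auto
          then show False using that jle_refl[of "y i"] unfolding V'_def by blast
        qed
        ultimately show "y i \<in> V - W" unfolding V'_def by auto
      qed
      then have p1: "c - e \<le> psum s y N (V - W)" using c1 N[of V'] by simp
      have "ennreal (r - e) < ennreal (rsum s y W)" using n1 n2 seq open_Wk unfolding W_def
        by (metis order_less_le_trans)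
      then have "r - e < rsum s y W" using ennreal_lessD rsum_nonneg[OF _ ssm] snn by blast
      then have "r - 2 * e < psum s y N W" using N[of W] by simp
      moreover have "psum s y N W = psum s y N (W \<inter> {p. snd p \<noteq> \<infinity>}) + psum s y N (W - {p. snd p \<noteq> \<infinity>})"
        by (rule psum_split)
      moreover have "psum s y N (W \<inter> {p. snd p \<noteq> \<infinity>}) < 2 * e"
        using key[OF n2F n0le2 snn ssm seq kK] unfolding W_def by blast
      moreover have "psum s y N (W - {p. snd p \<noteq> \<infinity>}) \<le> psum s y N (V \<inter> W)"
      proof (rule psum_mono)
        show "0 \<le> s i" for i using snn by simp
        fix i assume "i < N" "y i \<in> W - {p. snd p \<noteq> \<infinity>}"
        then have "y i \<in> C'" unfolding C'_def by auto
        then show "y i \<in> V \<inter> W" using CV \<open>y i \<in> W - {p. snd p \<noteq> \<infinity>}\<close> by auto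
      qed
      ultimately have p2: "r - 4 * e < psum s y N (V \<inter> W)" by linarith
      have "psum s y N V = psum s y N (V \<inter> W) + psum s y N (V - W)" by (rule psum_split)
      then have "c + r / 2 \<le> psum s y N V" using p1 p2 unfolding e_def by linarith
      also have "\<dots> \<le> rsum s y V" using psum_le[OF _ ssm] snn by blast
      finally have "c + r / 2 \<le> rsum s y V" .
      then show ?thesis using seq oV by (simp add: ennreal_leI)
    qed
    moreover have "finite C'" unfolding C'_def using finC by simp
    moreover have "\<forall>m\<in>C'. snd m = \<infinity>" unfolding C'_def using maxC by auto
    ultimately have "Inv \<nu>2 C' (c + r / 2)" unfolding Inv_def using n2F n0le2 by blast
    then show ?thesis by blast
  qed
  have base: "Inv \<nu>0 {} 0" unfolding Inv_def using nu0F by auto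
  have ind: "\<exists>\<nu> C. Inv \<nu> C (real n * (r / 2))" for n
  proof (induction n)
    case 0 then show ?case using base by auto
  next
    case (Suc n)
    then obtain \<nu> C where "Inv \<nu> C (real n * (r / 2))" by blast
    moreover have "real (Suc n) * (r / 2) = real n * (r / 2) + r / 2" by (simp add: algebra_simps)
    ultimately show ?case using step by metis
  qed
  have bound: "c \<le> 1" if "Inv \<nu> C c" for \<nu> C c
  proof -
    have "ennreal c \<le> \<nu> UNIV" using that open_UNIV unfolding Inv_def by blast
    also have "\<dots> \<le> 1" using le1 that unfolding Inv_def by blast
    finally show ?thesis by (simp add: ennreal_le_iff2)
  qed
  define n where "n = nat (ceiling (4 / r))"
  have "4 / r \<le> real n" unfolding n_def by linarith
  then have "4 \<le> real n * r" using assms(2) by (simp add: field_simps)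
  moreover have "real n * (r / 2) \<le> 1" using ind[of n] bound by blast
  ultimately show False by simp
qed
end
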